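(* Let $\boldsymbol\nu=\{\nu_t\}_{t>0}$ be a measurable factorizing family over $[0,1]\times\{\ast\}$. Fix $s,t>0$, set $u=\lambda(s+t)$, $u_1=\lambda s$, $u_2=\lambda t$, and assume that for all sufficiently small $u$: (A) under $\nu_u(\cdot\mid Z\neq\varnothing)$ the anchor $\alpha_u(Z)$ is uniform on $(0,u)$; (D) $\nu_u(\mathrm{diam}_u(Z)\ge u^2\mid Z\neq\varnothing)\le u$. Let $E_{10}=\{Z\cap[0,u_1]\neq\varnothing,\ Z\cap(u_1,u]=\varnothing\}$, $E_{01}=\{Z\cap[0,u_1]=\varnothing,\ Z\cap[u_1,u]\neq\varnothing\}$, $R_{0,u_1}(Z)=Z\cap[0,u_1]$, $R_{u_1,u}(Z)=(Z\cap[u_1,u])-u_1$; let $\widehat\nu_u^{10}$ be the law of $R_{0,u_1}(Z)$ under $\nu_u(\cdot\mid E_{10})$, $\widehat\nu_u^{01}$ the law of $R_{u_1,u}(Z)$ under $\nu_u(\cdot\mid E_{01})$, $\bar\nu_u^{(u_1)}$ the law of $R_{0,u_1}(Z)$ under $\nu_u(\cdot\mid R_{0,u_1}(Z)\neq\varnothing)$, and $\bar\nu_u^{(u_2)}$ the law of $R_{u_1,u}(Z)$ under $\nu_u(\cdot\mid R_{u_1,u}(Z)\neq\varnothing)$. Then there is $C_{s,t}<\infty$ such that for all sufficiently small $\lambda>0$, $\|\widehat\nu_u^{10}-\bar\nu_u^{(u_1)}\|_{\mathrm{TV}}\le C_{s,t}u$ and $\|\widehat\nu_u^{01}-\bar\nu_u^{(u_2)}\|_{\mathrm{TV}}\le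 C_{s,t}u$.
   Context: $\mathscr C_t^{\{\ast\}}$ is the space of closed subsets of $[0,t]$ with Borel $\sigma$-field $\Sigma_t$ of the Fell topology; $\oplus_{s,t}(Z_1,Z_2)=Z_1\cup(s+Z_2)$; $\sigma_t(Z)=\{r/t:r\in Z\}$. A measurable factorizing family over $[0,1]\times\{\ast\}$ is a family of probability measures $\nu_t$ on $\mathscr C_t^{\{\ast\}}$ with: (i) $\nu_{s+t}$ and $(\nu_s\otimes\nu_t)\circ\oplus_{s,t}^{-1}$ mutually absolutely continuous; (ii) $\nu_t(\{Z:r\in Z\})=0$ for all $r\in[0,t]$; (iii) no $\nu_t$ supported on finitely many atoms; (iv a) a countable ring $\mathcal R\subset\Sigma_1$ generating $\Sigma_1$ with $t\mapsto(\sigma_t)_*\nu_t(A)$ Borel for $A\in\mathcal R$; (iv b) a Borel $\Delta$ on $(0,\infty)^2\times\mathscr C_1^{\{\ast\}}$ with $\Delta(s,t,\sigma_{s+t}(Z))=d((\nu_s\otimes\nu_t)\circ\oplus_{s,t}^{-1})/d\nu_{s+t}(Z)$ a.e. Anchor: $\alpha_u(Z)=\inf Z$ ($0$ if empty); spread: $\mathrm{diam}_u(Z)=\sup Z-\inf Z$ ($0$ if empty). $\|\rho-\eta\|_{\mathrm{TV}}=\sup_A|\rho(A)-\eta(A)|$. *)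

theory Defs
  imports "HOL-Probability.Probability"
begin

definition closed_subsets :: "real \<Rightarrow> real set set" where
  "closed_subsets t = {Z. closed Z \<and> Z \<subseteq> {0..t}}"

definition fell_topology :: "real \<Rightarrow> real set topology" where
  "fell_topology t = subtopology
     (topology_generated_by
        ({{Z. Z \<inter> K = {}} | K. compact K} \<union> {{Z. Z \<inter> G \<noteq> {}} | G. open G}))
     (closed_subsets t)"

definition borel_sigma_of :: "'a topology \<Rightarrow> 'a measure" where
  "borel_sigma_of T = sigma (topspace T) (Collect (openin T))"

definition Cmeas :: "real \<Rightarrow> real set measure" where
  "Cmeas t = borel_sigma_of (fell_topology t)"

definition oplus :: "real \<Rightarrow> real set \<times> real set \<Rightarrow> real set" where
  "oplus s = (\<lambda>(Z1, Z2). Z1 \<union> (\<lambda>r. s + r) ` Z2)"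

definition sigma_scale :: "real \<Rightarrow> real set \<Rightarrow> real set" where
  "sigma_scale t Z = (\<lambda>r. r / t) ` Z"

definition measurable_factorizing_family :: "(real \<Rightarrow> real set measure) \<Rightarrow> bool" where
  "measurable_factorizing_family \<nu> \<longleftrightarrow>
     (\<forall>t>0. prob_space (\<nu> t) \<and> sets (\<nu> t) = sets (Cmeas t)) \<and>
     \<comment> \<open>(i) mutual absolute continuity\<close>
     (\<forall>s>0. \<forall>t>0.
        absolutely_continuous (\<nu> (s + t)) (distr (\<nu> s \<Otimes>\<^sub>M \<nu> t) (Cmeas (s + t)) (oplus s)) \<and>
        absolutely_continuous (distr (\<nu> s \<Otimes>\<^sub>M \<nu> t) (Cmeas (s + t)) (oplus s)) (\<nu> (s + t))) \<and>
     \<comment> \<open>(ii) no fixed points\<close>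
     (\<forall>t>0. \<forall>r\<in>{0..t}. measure (\<nu> t) {Z \<in> space (Cmeas t). r \<in> Z} = 0) \<and>
     \<comment> \<open>(iii) no nu_t supported on finitely many atoms\<close>
     (\<forall>t>0. \<not> (\<exists>S. finite S \<and> S \<subseteq> space (Cmeas t) \<and> measure (\<nu> t) S = 1)) \<and>
     \<comment> \<open>(iv a)\<close>
     (\<exists>R. countable R \<and> ring_of_sets (space (Cmeas 1)) R \<and>
          sigma_sets (space (Cmeas 1)) R = sets (Cmeas 1) \<and>
          (\<forall>A\<in>R. (\<lambda>t. measure (distr (\<nu> t) (Cmeas 1) (sigma_scale t)) A)
                     \<in> borel_measurable (restrict_space borel {0<..}))) \<and>
     \<comment> \<open>(iv b)\<close>
     (\<exists>\<Delta> :: (real \<times> real) \<times> real set \<Rightarrow> ennreal.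
        \<Delta> \<in> borel_measurable
              ((restrict_space borel {0<..} \<Otimes>\<^sub>M restrict_space borel {0<..}) \<Otimes>\<^sub>M Cmeas 1) \<and>
        (\<forall>s>0. \<forall>t>0. AE Z in \<nu> (s + t).
            \<Delta> ((s, t), sigma_scale (s + t) Z)
              = RN_deriv (\<nu> (s + t)) (distr (\<nu> s \<Otimes>\<^sub>M \<nu> t) (Cmeas (s + t)) (oplus s)) Z))"

definition anchor :: "real set \<Rightarrow> real" where
  "anchor Z = (if Z = {} then 0 else Inf Z)"

definition spread :: "real set \<Rightarrow> real" where
  "spread Z = (if Z = {} then 0 else Sup Z - Inf Z)"

definition tv_dist :: "'a measure \<Rightarrow> 'a measure \<Rightarrow> real" where
  "tv_dist M N = (SUP A\<in>sets M. \<bar>measure M A - measure N A\<bar>)"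

definition cond :: "'a measure \<Rightarrow> 'a set \<Rightarrow> 'a measure" where
  "cond M E = uniform_measure M E"

end

theory Submission
  imports Defs
begin

definition SB :: "real set set set" where
  "SB = {{Z. Z \<inter> K = {}} | K. compact K} \<union> {{Z. Z \<inter> G \<noteq> {}} | G. open G}"

definition Bset :: "(rat\<times>rat) list \<Rightarrow> (rat\<times>rat) list \<Rightarrow> real set set" where
  "Bset ks gs = {Z. (\<forall>(a,b)\<in>set ks. Z \<inter> {real_of_rat a..real_of_rat b} = {}) \<and>
                    (\<forall>(a,b)\<in>set gs. Z \<inter> {real_of_rat a<..<real_of_rat b} \<noteq> {})}"

lemma Bset_Cons1: "Bset ((a,b)#ks) gs = {Z. Z \<inter> {real_of_rat a..real_of_rat b} = {}} \<inter> Bset ks gs"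
  unfolding Bset_def by auto

lemma Bset_Cons2: "Bset [] ((a,b)#gs) = {Z. Z \<inter> {real_of_rat a<..<real_of_rat b} \<noteq> {}} \<inter> Bset [] gs"
  unfolding Bset_def by auto

lemma Bset_Nil: "Bset [] [] = UNIV" unfolding Bset_def by auto

lemma Bset_append: "Bset ks1 gs1 \<inter> Bset ks2 gs2 = Bset (ks1 @ ks2) (gs1 @ gs2)"
  unfolding Bset_def set_append ball_Un by blast

lemma Bset_gen: "generate_topology_on SB (Bset ks gs)"
proof (induction ks)
  case Nil
  show ?case
  proof (induction gs)
    case Nil
    have "{Z::real set. Z \<inter> {} = {}} \<in> SB" unfolding SB_def
      by (intro UnI1 CollectI exI[of _ "{}"] conjI) auto
    moreover have "Bset [] [] = {Z::real set. Z \<inter> {} = {}}" by (simp add: Bset_Nil)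
    ultimately have "Bset [] [] \<in> SB" by simp
    then show ?case by (rule generate_topology_on.Basis)
  next
    case (Cons p gs)
    obtain a b where p: "p = (a,b)" by force
    have "{Z. Z \<inter> {real_of_rat a<..<real_of_rat b} \<noteq> {}} \<in> SB" unfolding SB_def
      by (intro UnI2 CollectI exI[of _ "{real_of_rat a<..<real_of_rat b}"] conjI) auto
    then show ?case unfolding p Bset_Cons2
      by (intro generate_topology_on.Int generate_topology_on.Basis Cons)
  qed
next
  case (Cons p ks)
  obtain a b where p: "p = (a,b)" by force
  have "{Z. Z \<inter> {real_of_rat a..real_of_rat b} = {}} \<in> SB" unfolding SB_def
    by (intro UnI1 CollectI exI[of _ "{real_of_rat a..real_of_rat b}"] conjI) auto
  then show ?case unfolding p Bset_Cons1
    by (intro generate_topology_on.Int generate_topology_on.Basis Cons)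
qed

lemma rat_interval_in:
  fixes x e :: real assumes "e > 0"
  obtains a b :: rat where "real_of_rat a < x" "x < real_of_rat b" "{real_of_rat a..real_of_rat b} \<subseteq> ball x e"
proof -
  have "x - e/2 < x" using assms by simp
  then obtain a where a: "a \<in> \<rat>" "x - e/2 < a" "a < x" using Rats_dense_in_real by blast
  have "x < x + e/2" using assms by simp
  then obtain b where b: "b \<in> \<rat>" "x < b" "b < x + e/2" using Rats_dense_in_real by blast
  obtain a' where a': "a = real_of_rat a'" using a(1) Rats_cases by blast
  obtain b' where b': "b = real_of_rat b'" using b(1) Rats_cases by blast
  have "{a..b} \<subseteq> ball x e"
  proof
    fix y assume "y \<in> {a..b}"
    then have "a \<le> y" "y \<le> b" by auto
    then have "\<bar>x - y\<bar> < e" using a(2) b(3) assms by linarith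
    then show "y \<in> ball x e" by (simp add: dist_real_def)
  qed
  then show ?thesis using that[of a' b'] a b a' b' by simp
qed

lemma basis_K:
  assumes "compact K" "closed Z" "Z \<inter> K = {}"
  shows "\<exists>ks. Z \<in> Bset ks [] \<and> Bset ks [] \<subseteq> {Z'. Z' \<inter> K = {}}"
proof -
  define C where "C = {(a::rat,b::rat). Z \<inter> {real_of_rat a..real_of_rat b} = {}}"
  define f where "f = (\<lambda>(a::rat,b::rat). {real_of_rat a<..<real_of_rat b})"
  have cov: "K \<subseteq> (\<Union>c\<in>C. f c)"
  proof
    fix x assume "x \<in> K"
    then have "x \<in> - Z" using assms by auto
    then obtain e where e: "e > 0" "ball x e \<subseteq> - Z" using assms(2) open_contains_ball by (metis open_Compl)
    obtain a b where ab: "real_of_rat a < x" "x < real_of_rat b" "{real_of_rat a..real_of_rat b} \<subseteq> ball x e"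
      using rat_interval_in[OF e(1)] by metis
    have "(a,b) \<in> C" using ab e unfolding C_def by auto
    then show "x \<in> (\<Union>c\<in>C. f c)" using ab unfolding f_def by force
  qed
  obtain C' where C': "C' \<subseteq> C" "finite C'" "K \<subseteq> (\<Union>c\<in>C'. f c)"
  proof -
    have opn: "\<And>c. c \<in> C \<Longrightarrow> open (f c)" unfolding f_def by auto
    show ?thesis
      apply (rule compactE_image[of K C f])
         apply (rule assms(1))
        apply (erule opn)
       apply (rule cov)
      apply (rule that)
        apply assumption+
      done
  qed
  obtain ks where ks: "set ks = C'" using C'(2) finite_list by blast
  show ?thesis
  proof (intro exI[of _ ks] conjI)
    show "Z \<in> Bset ks []" using C'(1) ks unfolding Bset_def C_def by auto
    show "Bset ks [] \<subseteq> {Z'. Z' \<inter> K = {}}"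
    proof safe
      fix Z' x assume Z': "Z' \<in> Bset ks []" "x \<in> Z'" "x \<in> K"
      then obtain c where c: "c \<in> C'" "x \<in> f c" using C'(3) by auto
      obtain a b where cab: "c = (a,b)" by force
      have "Z' \<inter> {real_of_rat a..real_of_rat b} = {}" using Z'(1) c(1) ks cab unfolding Bset_def by auto
      then show "x \<in> {}" using c(2) cab Z'(2) unfolding f_def by auto
    qed
  qed
qed

lemma basis_G:
  assumes "open G" "Z \<inter> G \<noteq> {}"
  shows "\<exists>gs. Z \<in> Bset [] gs \<and> Bset [] gs \<subseteq> {Z'. Z' \<inter> G \<noteq> {}}"
proof -
  obtain z where z: "z \<in> Z" "z \<in> G" using assms by auto
  then obtain e where e: "e > 0" "ball z e \<subseteq> G" using assms(1) open_contains_ball by metis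
  obtain a b where ab: "real_of_rat a < z" "z < real_of_rat b" "{real_of_rat a..real_of_rat b} \<subseteq> ball z e"
    using rat_interval_in[OF e(1)] by metis
  show ?thesis
  proof (intro exI[of _ "[(a,b)]"] conjI)
    show "Z \<in> Bset [] [(a,b)]" using z ab unfolding Bset_def by auto
    show "Bset [] [(a,b)] \<subseteq> {Z'. Z' \<inter> G \<noteq> {}}"
    proof
      fix Z' assume "Z' \<in> Bset [] [(a,b)]"
      then obtain x where "x \<in> Z'" "real_of_rat a < x" "x < real_of_rat b" unfolding Bset_def by auto
      then have "x \<in> {real_of_rat a..real_of_rat b}" by simp
      then have "x \<in> G" using ab(3) e(2) by blast
      then show "Z' \<in> {Z'. Z' \<inter> G \<noteq> {}}" using \<open>x \<in> Z'\<close> by auto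
    qed
  qed
qed

lemma gen_basis:
  assumes "generate_topology_on SB U" "Z \<in> U" "closed Z"
  shows "\<exists>ks gs. Z \<in> Bset ks gs \<and> Bset ks gs \<subseteq> U"
  using assms
proof (induction arbitrary: Z rule: generate_topology_on.induct)
  case Empty
  then show ?case by auto
next
  case (Int a b)
  from Int.IH(1)[of Z] Int.prems obtain ks1 gs1 where 1: "Z \<in> Bset ks1 gs1" "Bset ks1 gs1 \<subseteq> a"
    by auto
  from Int.IH(2)[of Z] Int.prems obtain ks2 gs2 where 2: "Z \<in> Bset ks2 gs2" "Bset ks2 gs2 \<subseteq> b"
    by auto
  have "Z \<in> Bset (ks1 @ ks2) (gs1 @ gs2)" using 1 2 Bset_append[of ks1 gs1 ks2 gs2] by auto
  moreover have "Bset (ks1 @ ks2) (gs1 @ gs2) \<subseteq> a \<inter> b" using 1 2 Bset_append[of ks1 gs1 ks2 gs2] by auto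
  ultimately show ?case by blast
next
  case (UN K)
  from UN.prems obtain k where k: "k \<in> K" "Z \<in> k" by auto
  from UN.IH[OF k(1) k(2) UN.prems(2)] obtain ks gs where "Z \<in> Bset ks gs" "Bset ks gs \<subseteq> k" by auto
  then show ?case using k(1) by blast
next
  case (Basis s)
  have "(\<exists>K. s = {Z. Z \<inter> K = {}} \<and> compact K) \<or> (\<exists>G. s = {Z. Z \<inter> G \<noteq> {}} \<and> open G)"
    using Basis.hyps unfolding SB_def by simp
  then consider K where "compact K" "s = {Z. Z \<inter> K = {}}" | G where "open G" "s = {Z. Z \<inter> G \<noteq> {}}"
    by (elim disjE exE conjE) auto
  then show ?case
  proof cases
    case 1
    then have "Z \<inter> K = {}" using Basis.prems by auto
    from basis_K[OF 1(1) Basis.prems(2) this] obtain ks where "Z \<in> Bset ks []" "Bset ks [] \<subseteq> {Z'. Z' \<inter> K = {}}" by auto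
    then show ?thesis using 1(2) by blast
  next
    case 2
    then have "Z \<inter> G \<noteq> {}" using Basis.prems by auto
    from basis_G[OF 2(1) this] obtain gs where "Z \<in> Bset [] gs" "Bset [] gs \<subseteq> {Z'. Z' \<inter> G \<noteq> {}}" by auto
    then show ?thesis using 2(2) by blast
  qed
qed

lemma fell_eq: "fell_topology t = subtopology (topology_generated_by SB) (closed_subsets t)"
  by (simp add: fell_topology_def SB_def)

lemma UNIV_SB: "UNIV \<in> SB"
proof -
  have "{Z::real set. Z \<inter> {} = {}} \<in> SB" unfolding SB_def
    by (intro UnI1 CollectI exI[of _ "{}"] conjI) auto
  then show ?thesis by simp
qed

lemma topspace_fell: "topspace (fell_topology t) = closed_subsets t"
proof -
  have "\<Union>SB = UNIV" using UNIV_SB by blast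
  then show ?thesis by (simp add: fell_eq)
qed

lemma openin_fell: "openin (fell_topology t) U \<longleftrightarrow> (\<exists>V. generate_topology_on SB V \<and> U = V \<inter> closed_subsets t)"
  unfolding fell_eq openin_subtopology openin_topology_generated_by_iff by auto

lemma open_sub: "Collect (openin (fell_topology t)) \<subseteq> Pow (closed_subsets t)"
  using openin_subset topspace_fell by blast

lemma space_Cmeas: "space (Cmeas t) = closed_subsets t"
  unfolding Cmeas_def borel_sigma_of_def topspace_fell by (simp add: space_measure_of_conv)

lemma sets_Cmeas0: "sets (Cmeas t) = sigma_sets (closed_subsets t) (Collect (openin (fell_topology t)))"
  unfolding Cmeas_def borel_sigma_of_def topspace_fell using open_sub by (simp add: sets_measure_of)

definition Bgen :: "real \<Rightarrow> real set set set" where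
  "Bgen t = range (\<lambda>(ks,gs). Bset ks gs \<inter> closed_subsets t)"

lemma Bgen_sub: "Bgen t \<subseteq> Pow (closed_subsets t)"
  unfolding Bgen_def by auto

lemma sets_Cmeas: "sets (Cmeas t) = sigma_sets (closed_subsets t) (Bgen t)"
  unfolding sets_Cmeas0
proof (rule sigma_sets_eqI)
  fix U assume "U \<in> Collect (openin (fell_topology t))"
  then obtain V where V: "generate_topology_on SB V" "U = V \<inter> closed_subsets t"
    using openin_fell by auto
  define I where "I = {p. Bset (fst p) (snd p) \<subseteq> V}"
  have "U = (\<Union>p\<in>I. Bset (fst p) (snd p) \<inter> closed_subsets t)"
  proof
    show "U \<subseteq> (\<Union>p\<in>I. Bset (fst p) (snd p) \<inter> closed_subsets t)"
    proof
      fix Z assume Z: "Z \<in> U"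
      then have "Z \<in> V" "closed Z" using V(2) unfolding closed_subsets_def by auto
      from gen_basis[OF V(1) this] obtain ks gs where "Z \<in> Bset ks gs" "Bset ks gs \<subseteq> V" by auto
      moreover have "Z \<in> closed_subsets t" using Z V(2) by auto
      ultimately show "Z \<in> (\<Union>p\<in>I. Bset (fst p) (snd p) \<inter> closed_subsets t)"
        unfolding I_def by (intro UN_I[of "(ks,gs)"]) auto
    qed
    show "(\<Union>p\<in>I. Bset (fst p) (snd p) \<inter> closed_subsets t) \<subseteq> U"
      using V(2) unfolding I_def by auto
  qed
  also have "\<dots> \<in> sigma_sets (closed_subsets t) (Bgen t)"
  proof (rule sigma_sets_UNION)
    show "countable ((\<lambda>p. Bset (fst p) (snd p) \<inter> closed_subsets t) ` I)"
      by (rule countable_image) (rule countable_subset[OF subset_UNIV], simp)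
    fix b assume "b \<in> (\<lambda>p. Bset (fst p) (snd p) \<inter> closed_subsets t) ` I"
    then have "b \<in> Bgen t" unfolding Bgen_def by auto
    then show "b \<in> sigma_sets (closed_subsets t) (Bgen t)" by (rule sigma_sets.Basic)
  qed
  finally show "U \<in> sigma_sets (closed_subsets t) (Bgen t)" .
next
  fix b assume "b \<in> Bgen t"
  then obtain ks gs where b: "b = Bset ks gs \<inter> closed_subsets t" unfolding Bgen_def by auto
  have "openin (fell_topology t) b" unfolding openin_fell b using Bset_gen by blast
  then show "b \<in> sigma_sets (closed_subsets t) (Collect (openin (fell_topology t)))"
    by (intro sigma_sets.Basic) simp
qed

lemma open_in_sets: "openin (fell_topology t) U \<Longrightarrow> U \<in> sets (Cmeas t)"
  unfolding sets_Cmeas0 by (intro sigma_sets.Basic) simp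

lemma miss_sets:
  assumes "compact K"
  shows "{Z \<in> space (Cmeas t). Z \<inter> K = {}} \<in> sets (Cmeas t)"
proof -
  have "{Z. Z \<inter> K = {}} \<in> SB" unfolding SB_def
    using assms by (intro UnI1 CollectI exI[of _ K] conjI) auto
  then have "openin (fell_topology t) ({Z. Z \<inter> K = {}} \<inter> closed_subsets t)"
    unfolding openin_fell by (blast intro: generate_topology_on.Basis)
  moreover have "{Z \<in> space (Cmeas t). Z \<inter> K = {}} = {Z. Z \<inter> K = {}} \<inter> closed_subsets t"
    unfolding space_Cmeas by auto
  ultimately show ?thesis using open_in_sets by simp
qed

lemma hit_sets:
  assumes "compact K"
  shows "{Z \<in> space (Cmeas t). Z \<inter> K \<noteq> {}} \<in> sets (Cmeas t)"
proof -
  have "{Z \<in> space (Cmeas t). Z \<inter> K \<noteq> {}} = space (Cmeas t) - {Z \<in> space (Cmeas t). Z \<inter> K = {}}" by auto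
  then show ?thesis using miss_sets[OF assms] by auto
qed

lemma Icc_Ioo_union:
  fixes a b c d :: real
  shows "{c..d} \<inter> {a<..<b} = (\<Union>n. {c..d} \<inter> {a + 1/(Suc n)..b - 1/(Suc n)})"
proof
  show "{c..d} \<inter> {a<..<b} \<subseteq> (\<Union>n. {c..d} \<inter> {a + 1/(Suc n)..b - 1/(Suc n)})"
  proof
    fix x assume x: "x \<in> {c..d} \<inter> {a<..<b}"
    then have "min (x - a) (b - x) > 0" by auto
    then obtain n where n: "inverse (real (Suc n)) < min (x - a) (b - x)" using reals_Archimedean by blast
    then have "x \<in> {c..d} \<inter> {a + 1/(Suc n)..b - 1/(Suc n)}" using x by (auto simp: field_simps)
    then show "x \<in> (\<Union>n. {c..d} \<inter> {a + 1/(Suc n)..b - 1/(Suc n)})" by blast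
  qed
  show "(\<Union>n. {c..d} \<inter> {a + 1/(Suc n)..b - 1/(Suc n)}) \<subseteq> {c..d} \<inter> {a<..<b}"
  proof
    fix x assume "x \<in> (\<Union>n. {c..d} \<inter> {a + 1/(Suc n)..b - 1/(Suc n)})"
    then obtain n where n: "x \<in> {c..d}" "a + 1/(Suc n) \<le> x" "x \<le> b - 1/(Suc n)" by auto
    have h: "0 < 1/real (Suc n)" by simp
    have "a < x" "x < b" using n(2,3) h by linarith+
    then show "x \<in> {c..d} \<inter> {a<..<b}" using n(1) by auto
  qed
qed

lemma hitS_sets:
  fixes a b c d :: real
  shows "{Z \<in> space (Cmeas t). Z \<inter> ({c..d} \<inter> {a<..<b}) \<noteq> {}} \<in> sets (Cmeas t)"
proof -
  have "{Z \<in> space (Cmeas t). Z \<inter> ({c..d} \<inter> {a<..<b}) \<noteq> {}}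
      = (\<Union>n. {Z \<in> space (Cmeas t). Z \<inter> ({c..d} \<inter> {a + 1/(Suc n)..b - 1/(Suc n)}) \<noteq> {}})"
    unfolding Icc_Ioo_union[of c d a b] by blast
  also have "\<dots> \<in> sets (Cmeas t)"
  proof (rule sets.countable_UN)
    show "range (\<lambda>n. {Z \<in> space (Cmeas t). Z \<inter> ({c..d} \<inter> {a + 1/(Suc n)..b - 1/(Suc n)}) \<noteq> {}}) \<subseteq> sets (Cmeas t)"
    proof (rule image_subsetI)
      fix n :: nat
      show "{Z \<in> space (Cmeas t). Z \<inter> ({c..d} \<inter> {a + 1/(Suc n)..b - 1/(Suc n)}) \<noteq> {}} \<in> sets (Cmeas t)"
        by (rule hit_sets) (intro compact_Int compact_Icc)
    qed
  qed
  finally show ?thesis .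
qed

lemma missS_sets:
  fixes a b c d :: real
  shows "{Z \<in> space (Cmeas t). Z \<inter> ({c..d} \<inter> {a<..<b}) = {}} \<in> sets (Cmeas t)"
proof -
  have "{Z \<in> space (Cmeas t). Z \<inter> ({c..d} \<inter> {a<..<b}) = {}} = space (Cmeas t) - {Z \<in> space (Cmeas t). Z \<inter> ({c..d} \<inter> {a<..<b}) \<noteq> {}}" by auto
  then show ?thesis using hitS_sets[of t c d a b] by auto
qed

lemma meas_Cmeas:
  assumes f: "f \<in> space M \<rightarrow> closed_subsets t"
    and K: "\<And>a b. {x \<in> space M. f x \<inter> {a..b} = {}} \<in> sets M"
    and G: "\<And>a b. {x \<in> space M. f x \<inter> {a<..<b} \<noteq> {}} \<in> sets M"
  shows "f \<in> measurable M (Cmeas t)"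
proof -
  have pre: "{x \<in> space M. f x \<in> Bset ks gs} \<in> sets M" for ks gs
  proof (induction ks)
    case Nil
    show ?case
    proof (induction gs)
      case Nil
      then show ?case by (simp add: Bset_Nil)
    next
      case (Cons p gs)
      obtain a b where p: "p = (a,b)" by force
      have "{x \<in> space M. f x \<in> Bset [] (p#gs)} = {x \<in> space M. f x \<inter> {real_of_rat a<..<real_of_rat b} \<noteq> {}} \<inter> {x \<in> space M. f x \<in> Bset [] gs}"
        unfolding p Bset_Cons2 by auto
      then show ?case using Cons G by auto
    qed
  next
    case (Cons p ks)
    obtain a b where p: "p = (a,b)" by force
    have "{x \<in> space M. f x \<in> Bset (p#ks) gs} = {x \<in> space M. f x \<inter> {real_of_rat a..real_of_rat b} = {}} \<inter> {x \<in> space M. f x \<in> Bset ks gs}"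
      unfolding p Bset_Cons1 by auto
    then show ?case using Cons K by auto
  qed
  have "f \<in> measurable M (measure_of (closed_subsets t) (Bgen t) (\<lambda>_. 0))"
  proof (rule measurable_measure_of[OF Bgen_sub f])
    fix y assume "y \<in> Bgen t"
    then obtain ks gs where y: "y = Bset ks gs \<inter> closed_subsets t" unfolding Bgen_def by auto
    have "f -` y \<inter> space M = {x \<in> space M. f x \<in> Bset ks gs}" using f y by auto
    then show "f -` y \<inter> space M \<in> sets M" using pre by simp
  qed
  moreover have "sets (measure_of (closed_subsets t) (Bgen t) (\<lambda>_. 0)) = sets (Cmeas t)"
    unfolding sets_Cmeas using Bgen_sub by (simp add: sets_measure_of)
  ultimately show ?thesis using measurable_cong_sets by blast
qed

lemma cs_facts:
  assumes "Z \<in> closed_subsets u" "Z \<noteq> {}"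
  shows "Inf Z \<in> Z" "Sup Z \<in> Z" "\<And>z. z \<in> Z \<Longrightarrow> Inf Z \<le> z" "\<And>z. z \<in> Z \<Longrightarrow> z \<le> Sup Z" "Z \<subseteq> {0..u}"
proof -
  have Z: "closed Z" "Z \<subseteq> {0..u}" using assms(1) unfolding closed_subsets_def by auto
  have bb: "bdd_below Z" by (rule bdd_below_mono[OF bdd_below_Icc Z(2)])
  have ba: "bdd_above Z" by (rule bdd_above_mono[OF bdd_above_Icc Z(2)])
  show "Inf Z \<in> Z" using closed_contains_Inf[OF assms(2) bb Z(1)] .
  show "Sup Z \<in> Z" using closed_contains_Sup[OF assms(2) ba Z(1)] .
  show "\<And>z. z \<in> Z \<Longrightarrow> Inf Z \<le> z" using bb by (rule cInf_lower[rotated])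
  show "\<And>z. z \<in> Z \<Longrightarrow> z \<le> Sup Z" using ba by (rule cSup_upper[rotated])
  show "Z \<subseteq> {0..u}" by (rule Z(2))
qed

lemma R1_meas:
  "(\<lambda>Z. Z \<inter> {0..u1}) \<in> measurable (Cmeas u) (Cmeas u1)"
proof (rule meas_Cmeas)
  show "(\<lambda>Z. Z \<inter> {0..u1}) \<in> space (Cmeas u) \<rightarrow> closed_subsets u1"
    unfolding space_Cmeas closed_subsets_def by auto
  fix a b :: real
  have "{x \<in> space (Cmeas u). x \<inter> {0..u1} \<inter> {a..b} = {}} = {x \<in> space (Cmeas u). x \<inter> ({0..u1} \<inter> {a..b}) = {}}"
    by (simp add: Int_assoc)
  then show "{x \<in> space (Cmeas u). x \<inter> {0..u1} \<inter> {a..b} = {}} \<in> sets (Cmeas u)"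
    using miss_sets[of "{0..u1} \<inter> {a..b}" u] by (simp add: compact_Int)
  have "{x \<in> space (Cmeas u). x \<inter> {0..u1} \<inter> {a<..<b} \<noteq> {}} = {x \<in> space (Cmeas u). x \<inter> ({0..u1} \<inter> {a<..<b}) \<noteq> {}}"
    by (simp add: Int_assoc)
  then show "{x \<in> space (Cmeas u). x \<inter> {0..u1} \<inter> {a<..<b} \<noteq> {}} \<in> sets (Cmeas u)"
    using hitS_sets[of u 0 u1 a b] by simp
qed

lemma shift_closed: "closed (S::real set) \<Longrightarrow> closed ((\<lambda>r. r - c) ` S)"
proof -
  assume "closed S"
  have "(\<lambda>r. r - c) ` S = (+) (-c) ` S" by (auto simp: image_iff)
  then show ?thesis using closed_translation[OF \<open>closed S\<close>, of "-c"] by simp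
qed

lemma shift_int:
  fixes X :: "real set"
  shows "((\<lambda>r. r - u1) ` (Z \<inter> {u1..u}) \<inter> X = {}) \<longleftrightarrow> (Z \<inter> ({u1..u} \<inter> (\<lambda>r. r + u1) ` X) = {})"
proof
  assume h: "(\<lambda>r. r - u1) ` (Z \<inter> {u1..u}) \<inter> X = {}"
  show "Z \<inter> ({u1..u} \<inter> (\<lambda>r. r + u1) ` X) = {}"
  proof (rule ccontr)
    assume "Z \<inter> ({u1..u} \<inter> (\<lambda>r. r + u1) ` X) \<noteq> {}"
    then obtain z where z: "z \<in> Z" "z \<in> {u1..u}" "z \<in> (\<lambda>r. r + u1) ` X" by blast
    then obtain x where x: "x \<in> X" "z = x + u1" by blast
    from z(1,2) x have "x \<in> (\<lambda>r. r - u1) ` (Z \<inter> {u1..u}) \<inter> X" by (auto intro!: image_eqI[of _ _ z])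
    then show False using h by auto
  qed
next
  assume h: "Z \<inter> ({u1..u} \<inter> (\<lambda>r. r + u1) ` X) = {}"
  show "(\<lambda>r. r - u1) ` (Z \<inter> {u1..u}) \<inter> X = {}"
  proof (rule ccontr)
    assume "(\<lambda>r. r - u1) ` (Z \<inter> {u1..u}) \<inter> X \<noteq> {}"
    then obtain z where "z \<in> Z" "z \<in> {u1..u}" "z - u1 \<in> X" by blast
    then have "z \<in> Z \<inter> ({u1..u} \<inter> (\<lambda>r. r + u1) ` X)" by (auto intro!: image_eqI[of _ _ "z - u1"])
    then show False using h by auto
  qed
qed

lemma shift_Icc: "(\<lambda>r. r + c) ` {a..b} = {a + c..b + (c::real)}"
  by (simp add: image_add_atLeastAtMost' add.commute)

lemma shift_Ioo: "(\<lambda>r. r + c) ` {a<..<b} = {a + c<..<b + (c::real)}"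
proof (intro set_eqI iffI)
  fix y assume "y \<in> {a + c<..<b + c}"
  then show "y \<in> (\<lambda>r. r + c) ` {a<..<b}" by (intro image_eqI[of _ _ "y - c"]) auto
qed auto

lemma R2_meas:
  assumes "u = u1 + u2"
  shows "(\<lambda>Z. (\<lambda>r. r - u1) ` (Z \<inter> {u1..u})) \<in> measurable (Cmeas u) (Cmeas u2)"
proof (rule meas_Cmeas)
  show "(\<lambda>Z. (\<lambda>r. r - u1) ` (Z \<inter> {u1..u})) \<in> space (Cmeas u) \<rightarrow> closed_subsets u2"
    unfolding space_Cmeas closed_subsets_def using assms by (auto intro!: shift_closed)
  fix a b :: real
  have "{x \<in> space (Cmeas u). (\<lambda>r. r - u1) ` (x \<inter> {u1..u}) \<inter> {a..b} = {}}
     = {x \<in> space (Cmeas u). x \<inter> ({u1..u} \<inter> {a + u1..b + u1}) = {}}"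
    by (simp only: shift_int shift_Icc)
  then show "{x \<in> space (Cmeas u). (\<lambda>r. r - u1) ` (x \<inter> {u1..u}) \<inter> {a..b} = {}} \<in> sets (Cmeas u)"
    using miss_sets[of "{u1..u} \<inter> {a + u1..b + u1}" u] by (simp add: compact_Int)
  have "{x \<in> space (Cmeas u). (\<lambda>r. r - u1) ` (x \<inter> {u1..u}) \<inter> {a<..<b} \<noteq> {}}
     = {x \<in> space (Cmeas u). x \<inter> ({u1..u} \<inter> {a + u1<..<b + u1}) \<noteq> {}}"
    by (simp only: shift_int shift_Ioo)
  then show "{x \<in> space (Cmeas u). (\<lambda>r. r - u1) ` (x \<inter> {u1..u}) \<inter> {a<..<b} \<noteq> {}} \<in> sets (Cmeas u)"
    using hitS_sets[of u u1 u "a + u1" "b + u1"] by simp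
qed

lemma empty_sets: "{Z \<in> space (Cmeas u). Z = {}} \<in> sets (Cmeas u)"
proof -
  have "{Z \<in> space (Cmeas u). Z = {}} = {Z \<in> space (Cmeas u). Z \<inter> {0..u} = {}}"
    unfolding space_Cmeas closed_subsets_def by auto
  then show ?thesis using miss_sets[of "{0..u}" u] by simp
qed

lemma anchor_meas: "anchor \<in> borel_measurable (Cmeas u)"
  unfolding borel_measurable_iff_le
proof
  fix a :: real
  have "{w \<in> space (Cmeas u). anchor w \<le> a} =
    {Z \<in> space (Cmeas u). Z \<inter> {0..a} \<noteq> {}} \<union> (if 0 \<le> a then {Z \<in> space (Cmeas u). Z = {}} else {})"
  proof (intro set_eqI iffI)
    fix Z assume Z: "Z \<in> {w \<in> space (Cmeas u). anchor w \<le> a}"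
    show "Z \<in> {Z \<in> space (Cmeas u). Z \<inter> {0..a} \<noteq> {}} \<union> (if 0 \<le> a then {Z \<in> space (Cmeas u). Z = {}} else {})"
    proof (cases "Z = {}")
      case True
      then show ?thesis using Z by (auto simp: anchor_def)
    next
      case False
      have Zc: "Z \<in> closed_subsets u" using Z space_Cmeas by auto
      note f = cs_facts[OF Zc False]
      have "Inf Z \<in> Z \<inter> {0..a}" using f(1) f(5) Z False by (auto simp: anchor_def)
      then show ?thesis using Z by auto
    qed
  next
    fix Z assume Z: "Z \<in> {Z \<in> space (Cmeas u). Z \<inter> {0..a} \<noteq> {}} \<union> (if 0 \<le> a then {Z \<in> space (Cmeas u). Z = {}} else {})"
    show "Z \<in> {w \<in> space (Cmeas u). anchor w \<le> a}"
    proof (cases "Z = {}")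
      case True
      then show ?thesis using Z by (auto simp: anchor_def split: if_splits)
    next
      case False
      then have Zs: "Z \<in> space (Cmeas u)" "Z \<inter> {0..a} \<noteq> {}" using Z by (auto split: if_splits)
      then obtain z where z: "z \<in> Z" "z \<le> a" by auto
      have Zc: "Z \<in> closed_subsets u" using Zs space_Cmeas by auto
      note f = cs_facts[OF Zc False]
      have "Inf Z \<le> a" using f(3)[OF z(1)] z(2) by linarith
      then show ?thesis using Zs False by (auto simp: anchor_def)
    qed
  qed
  also have "\<dots> \<in> sets (Cmeas u)"
    using hit_sets[of "{0..a}" u] empty_sets[of u] by auto
  finally show "{w \<in> space (Cmeas u). anchor w \<le> a} \<in> sets (Cmeas u)" .
qed

definition supf :: "real set \<Rightarrow> real" where
  "supf Z = (if Z = {} then 0 else Sup Z)"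

lemma supf_meas: "supf \<in> borel_measurable (Cmeas u)"
  unfolding borel_measurable_iff_ge
proof
  fix a :: real
  have "{w \<in> space (Cmeas u). a \<le> supf w} =
    {Z \<in> space (Cmeas u). Z \<inter> {a..u} \<noteq> {}} \<union> (if a \<le> 0 then {Z \<in> space (Cmeas u). Z = {}} else {})"
  proof (intro set_eqI iffI)
    fix Z assume Z: "Z \<in> {w \<in> space (Cmeas u). a \<le> supf w}"
    show "Z \<in> {Z \<in> space (Cmeas u). Z \<inter> {a..u} \<noteq> {}} \<union> (if a \<le> 0 then {Z \<in> space (Cmeas u). Z = {}} else {})"
    proof (cases "Z = {}")
      case True
      then show ?thesis using Z by (auto simp: supf_def)
    next
      case False
      have Zc: "Z \<in> closed_subsets u" using Z space_Cmeas by auto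
      note f = cs_facts[OF Zc False]
      have "Sup Z \<in> Z \<inter> {a..u}" using f(2) f(5) Z False by (auto simp: supf_def)
      then show ?thesis using Z by auto
    qed
  next
    fix Z assume Z: "Z \<in> {Z \<in> space (Cmeas u). Z \<inter> {a..u} \<noteq> {}} \<union> (if a \<le> 0 then {Z \<in> space (Cmeas u). Z = {}} else {})"
    show "Z \<in> {w \<in> space (Cmeas u). a \<le> supf w}"
    proof (cases "Z = {}")
      case True
      then show ?thesis using Z by (auto simp: supf_def split: if_splits)
    next
      case False
      then have Zs: "Z \<in> space (Cmeas u)" "Z \<inter> {a..u} \<noteq> {}" using Z by (auto split: if_splits)
      then obtain z where z: "z \<in> Z" "a \<le> z" by auto
      have Zc: "Z \<in> closed_subsets u" using Zs space_Cmeas by auto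
      note f = cs_facts[OF Zc False]
      have "a \<le> Sup Z" using f(4)[OF z(1)] z(2) by linarith
      then show ?thesis using Zs False by (auto simp: supf_def)
    qed
  qed
  also have "\<dots> \<in> sets (Cmeas u)"
    using hit_sets[of "{a..u}" u] empty_sets[of u] by auto
  finally show "{w \<in> space (Cmeas u). a \<le> supf w} \<in> sets (Cmeas u)" .
qed

lemma spread_eq: "spread Z = supf Z - anchor Z"
  by (simp add: spread_def supf_def anchor_def)

lemma spread_meas: "spread \<in> borel_measurable (Cmeas u)"
  unfolding spread_eq[abs_def] using supf_meas anchor_meas by (rule borel_measurable_diff)

lemma measure_unif:
  assumes P: "prob_space P" and E: "E \<in> sets P" and X: "X \<in> sets P"
  shows "measure (uniform_measure P E) X = measure P (E \<inter> X) / measure P E"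
proof (cases "measure P E = 0")
  case True
  interpret prob_space P by (rule P)
  have e0: "emeasure P E = 0" using True E by (simp add: emeasure_eq_measure)
  have "emeasure P (E \<inter> X) = 0" using e0 E X by (meson Int_lower1 emeasure_eq_0 sets.Int)
  then have "emeasure (uniform_measure P E) X = 0" using E X e0 by simp
  then show ?thesis using True by (simp add: measure_def)
next
  case False
  interpret prob_space P by (rule P)
  have "emeasure P E \<noteq> 0" using False E by (simp add: emeasure_eq_measure)
  then show ?thesis using X by (simp add: measure_uniform_measure)
qed

lemma frac_bound:
  fixes x y e d :: real
  assumes "0 \<le> x" "x \<le> e" "0 \<le> y" "y \<le> d"
  shows "\<bar>x / e - (x + y) / (e + d)\<bar> \<le> d / (e + d)"
proof (cases "e = 0")
  case True
  then have "x = 0" using assms by simp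
  then show ?thesis using True assms by (simp add: divide_right_mono)
next
  case False
  then have e: "e > 0" using assms by simp
  have d: "d \<ge> 0" using assms by simp
  have eq: "x / e - (x + y) / (e + d) = (x * d - y * e) / (e * (e + d))"
    using e d by (simp add: field_simps)
  have "x * d \<le> e * d" using assms d by (simp add: mult_right_mono)
  moreover have "y * e \<le> d * e" using assms e by (simp add: mult_right_mono)
  moreover have "0 \<le> x * d" "0 \<le> y * e" using assms d e by simp_all
  ultimately have "\<bar>x * d - y * e\<bar> \<le> e * d" by (simp add: abs_le_iff algebra_simps)
  then have "\<bar>x * d - y * e\<bar> / (e * (e + d)) \<le> (e * d) / (e * (e + d))"
    by (rule divide_right_mono) (use e d in auto)
  also have "\<dots> = d / (e + d)"
  proof -
    have ed: "e + d > 0" using e d by simp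
    show ?thesis by (rule mult_divide_mult_cancel_left) (use e in simp)
  qed
  finally show ?thesis unfolding eq using e d by (simp add: abs_div)
qed

lemma cond_diff:
  assumes P: "prob_space P" and E: "E \<in> sets P" and F: "F \<in> sets P" and EF: "E \<subseteq> F" and X: "X \<in> sets P"
  shows "\<bar>measure (uniform_measure P E) X - measure (uniform_measure P F) X\<bar> \<le> measure P (F - E) / measure P F"
proof -
  interpret prob_space P by (rule P)
  define x where "x = measure P (E \<inter> X)"
  define y where "y = measure P ((F - E) \<inter> X)"
  define e where "e = measure P E"
  define d where "d = measure P (F - E)"
  have fe: "measure P F = e + d" unfolding e_def d_def using finite_measure_Diff[OF F E EF] by simp
  have fx: "measure P (F \<inter> X) = x + y"
  proof -
    have s1: "F \<inter> X = (E \<inter> X) \<union> ((F - E) \<inter> X)" using EF by auto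
    have "measure P ((E \<inter> X) \<union> ((F - E) \<inter> X)) = measure P (E \<inter> X) + measure P ((F - E) \<inter> X)"
      by (rule finite_measure_Union) (use E F X in auto)
    then show ?thesis unfolding x_def y_def s1[symmetric] .
  qed
  have b: "0 \<le> x" "x \<le> e" "0 \<le> y" "y \<le> d" unfolding x_def e_def y_def d_def
    using E F X by (auto intro!: finite_measure_mono)
  show ?thesis
    unfolding measure_unif[OF P E X] measure_unif[OF P F X] fe fx
    using frac_bound[OF b] unfolding x_def e_def d_def .
qed

lemma tv_bound:
  assumes P: "prob_space P" and E: "E \<in> sets P" and F: "F \<in> sets P" and EF: "E \<subseteq> F"
    and g: "g \<in> measurable P N"
  shows "tv_dist (distr (uniform_measure P E) N g) (distr (uniform_measure P F) N g) \<le> measure P (F - E) / measure P F"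
  unfolding tv_dist_def sets_distr
proof (rule cSUP_least)
  show "sets N \<noteq> {}" using sets.empty_sets by blast
  fix A assume A: "A \<in> sets N"
  have gE: "g \<in> measurable (uniform_measure P E) N" using g measurable_cong_sets[of "uniform_measure P E" P N N] by simp
  have gF: "g \<in> measurable (uniform_measure P F) N" using g measurable_cong_sets[of "uniform_measure P F" P N N] by simp
  have X: "g -` A \<inter> space P \<in> sets P" using g A by (rule measurable_sets)
  show "\<bar>measure (distr (uniform_measure P E) N g) A - measure (distr (uniform_measure P F) N g) A\<bar> \<le> measure P (F - E) / measure P F"
    unfolding measure_distr[OF gE A] measure_distr[OF gF A] space_uniform_measure
    by (rule cond_diff[OF P E F EF X])
qed

lemma measure_Ioc: "a \<le> b \<Longrightarrow> measure lborel {a<..(b::real)} = b - a"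
  by (simp add: measure_def)

lemma main_bound:
  fixes u u1 c :: real
  assumes P: "prob_space P" and sP: "sets P = sets (Cmeas u)"
    and u: "0 < u" and c: "0 < c"
    and N: "N = {Z \<in> space P. Z \<noteq> {}}"
    and D: "D = {Z \<in> space P. u\<^sup>2 \<le> spread Z}"
    and eqA: "distr (uniform_measure P N) lborel anchor = uniform_measure lborel {0<..<u}"
    and Dq: "measure (uniform_measure P N) D \<le> u"
    and E: "E \<in> sets P" and F: "F \<in> sets P" and EF: "E \<subseteq> F"
    and FE: "F - E \<subseteq> N \<inter> ({Z. anchor Z \<in> {u1 - u\<^sup>2<..u1}} \<union> D)"
    and B: "B \<in> sets borel" and NB: "N \<inter> {Z. anchor Z \<in> B} \<subseteq> F"
    and cB: "measure lborel ({0<..<u} \<inter> B) = c"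
  shows "measure P (F - E) / measure P F \<le> 2 * u * u / c"
proof -
  interpret prob_space P by (rule P)
  have spP: "space P = space (Cmeas u)" using sP by (rule sets_eq_imp_space_eq)
  have Ns: "N \<in> sets P"
  proof -
    have "N = space (Cmeas u) - {Z \<in> space (Cmeas u). Z = {}}" unfolding N spP by auto
    then show ?thesis using empty_sets[of u] sP by auto
  qed
  have Ds: "D \<in> sets P"
  proof -
    have sp: "spread \<in> borel_measurable P" by (subst measurable_cong_sets[OF sP refl]) (rule spread_meas)
    have "D = spread -` {u\<^sup>2..} \<inter> space P" unfolding D by auto
    then show ?thesis using measurable_sets[OF sp, of "{u\<^sup>2..}"] by simp
  qed
  have aP: "anchor \<in> borel_measurable P" by (subst measurable_cong_sets[OF sP refl]) (rule anchor_meas)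
  have aQ: "anchor \<in> measurable (uniform_measure P N) lborel"
    by (subst measurable_cong_sets[of "uniform_measure P N" P lborel borel]) (use aP in simp_all)
  have uI: "emeasure lborel {0<..<u} = ennreal u" using u by simp
  have law: "measure P (N \<inter> (anchor -` B' \<inter> space P)) / measure P N = measure lborel ({0<..<u} \<inter> B') / u"
    if B': "B' \<in> sets borel" for B'
  proof -
    have "measure (uniform_measure P N) (anchor -` B' \<inter> space P) = measure (distr (uniform_measure P N) lborel anchor) B'"
      using measure_distr[OF aQ, of B'] B' by simp
    also have "\<dots> = measure lborel ({0<..<u} \<inter> B') / measure lborel {0<..<u}"
      unfolding eqA using uI u B' by (simp add: measure_uniform_measure)
    also have "measure lborel {0<..<u} = u" using u by (simp add: measure_def)
    finally show ?thesis using measure_unif[OF P Ns, of "anchor -` B' \<inter> space P"] aP B'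
      by (simp add: measurable_sets)
  qed
  have pN: "measure P N > 0"
  proof (rule ccontr)
    assume "\<not> measure P N > 0"
    then have "measure P N = 0" using measure_nonneg[of P N] by linarith
    then have "measure lborel ({0<..<u} \<inter> UNIV) / u = 0" using law[of UNIV] by simp
    moreover have "measure lborel ({0<..<u} \<inter> UNIV) = u" using u by (simp add: measure_def)
    ultimately show False using u by simp
  qed
  have "measure P (N \<inter> (anchor -` B \<inter> space P)) = measure P N * (c / u)"
    using law[OF B] cB pN by (simp add: field_simps)
  moreover have "measure P (N \<inter> (anchor -` B \<inter> space P)) \<le> measure P F"
    using NB F by (intro finite_measure_mono) auto
  ultimately have Flow: "measure P N * (c / u) \<le> measure P F" by simp
  define Bb where "Bb = {u1 - u\<^sup>2<..u1}"
  have Bbs: "Bb \<in> sets borel" unfolding Bb_def by simp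
  have "measure lborel ({0<..<u} \<inter> Bb) \<le> measure lborel Bb"
    by (rule measure_mono_fmeasurable) (auto simp: Bb_def fmeasurable_def)
  also have "\<dots> = u\<^sup>2" unfolding Bb_def by (simp add: measure_Ioc)
  finally have mBb: "measure lborel ({0<..<u} \<inter> Bb) \<le> u\<^sup>2" .
  have "measure P (N \<inter> (anchor -` Bb \<inter> space P)) = measure P N * (measure lborel ({0<..<u} \<inter> Bb) / u)"
    using law[OF Bbs] pN by (simp add: field_simps)
  also have "\<dots> \<le> measure P N * (u\<^sup>2 / u)"
    using mBb pN u by (intro mult_left_mono divide_right_mono) auto
  also have "\<dots> = measure P N * u" using u by (simp add: power2_eq_square)
  finally have m1: "measure P (N \<inter> (anchor -` Bb \<inter> space P)) \<le> measure P N * u" .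
  have "measure P (N \<inter> D) = measure (uniform_measure P N) D * measure P N"
    using measure_unif[OF P Ns Ds] pN by simp
  also have "\<dots> \<le> u * measure P N" using Dq pN by (simp add: mult_right_mono)
  finally have m2: "measure P (N \<inter> D) \<le> u * measure P N" .
  have "F - E \<subseteq> (N \<inter> (anchor -` Bb \<inter> space P)) \<union> (N \<inter> D)"
    using FE N unfolding Bb_def by auto
  then have "measure P (F - E) \<le> measure P ((N \<inter> (anchor -` Bb \<inter> space P)) \<union> (N \<inter> D))"
    using Ns Ds aP Bbs by (intro finite_measure_mono) (auto intro!: sets.Int sets.Un measurable_sets)
  also have "\<dots> \<le> measure P (N \<inter> (anchor -` Bb \<inter> space P)) + measure P (N \<inter> D)"
    by (rule measure_Un_le) (use Ns Ds aP Bbs in \<open>auto intro!: sets.Int measurable_sets\<close>)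
  finally have FEup: "measure P (F - E) \<le> 2 * u * measure P N" using m1 m2 by (simp add: algebra_simps)
  have "measure P (F - E) / measure P F \<le> (2 * u * measure P N) / (measure P N * (c / u))"
    by (rule frac_le) (use FEup Flow pN u c in auto)
  also have "\<dots> = 2 * u * u / c" using pN u c by (simp add: field_simps)
  finally show ?thesis .
qed

lemma per_u:
  fixes u u1 u2 :: real
  assumes P: "prob_space P" and sP: "sets P = sets (Cmeas u)"
    and u1: "0 < u1" "u1 < u" and u12: "u = u1 + u2"
    and eqA: "distr (cond P {Z \<in> space P. Z \<noteq> {}}) lborel anchor = uniform_measure lborel {0<..<u}"
    and Dq: "measure (cond P {Z \<in> space P. Z \<noteq> {}}) {Z \<in> space P. spread Z \<ge> u\<^sup>2} \<le> u"
  shows "tv_dist (distr (cond P {Z \<in> space P. Z \<inter> {0..u1} \<noteq> {} \<and> Z \<inter> {u1<..u} = {}}) (Cmeas u1) (\<lambda>Z. Z \<inter> {0..u1}))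
                 (distr (cond P {Z \<in> space P. Z \<inter> {0..u1} \<noteq> {}}) (Cmeas u1) (\<lambda>Z. Z \<inter> {0..u1})) \<le> 2 * u * u / u1"
    and "tv_dist (distr (cond P {Z \<in> space P. Z \<inter> {0..u1} = {} \<and> Z \<inter> {u1..u} \<noteq> {}}) (Cmeas u2) (\<lambda>Z. (\<lambda>r. r - u1) ` (Z \<inter> {u1..u})))
                 (distr (cond P {Z \<in> space P. (\<lambda>r. r - u1) ` (Z \<inter> {u1..u}) \<noteq> {}}) (Cmeas u2) (\<lambda>Z. (\<lambda>r. r - u1) ` (Z \<inter> {u1..u}))) \<le> 2 * u * u / u2"
proof -
  have u: "0 < u" "0 < u2" using u1 u12 by auto
  have spP: "space P = space (Cmeas u)" using sP by (rule sets_eq_imp_space_eq)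
  have spC: "space (Cmeas u) = closed_subsets u" by (rule space_Cmeas)
  define N where "N = {Z \<in> space P. Z \<noteq> {}}"
  define D where "D = {Z \<in> space P. u\<^sup>2 \<le> spread Z}"
  have eqA': "distr (uniform_measure P N) lborel anchor = uniform_measure lborel {0<..<u}"
    using eqA unfolding N_def cond_def .
  have Dq': "measure (uniform_measure P N) D \<le> u"
    using Dq unfolding N_def D_def cond_def .
  have key: "\<And>Z. Z \<in> space P \<Longrightarrow> Z \<noteq> {} \<Longrightarrow> Inf Z \<in> Z \<and> Sup Z \<in> Z \<and> (\<forall>z\<in>Z. Inf Z \<le> z \<and> z \<le> Sup Z) \<and> Z \<subseteq> {0..u}
     \<and> anchor Z = Inf Z \<and> spread Z = Sup Z - Inf Z"
  proof -
    fix Z assume Z: "Z \<in> space P" "Z \<noteq> {}"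
    have Zc: "Z \<in> closed_subsets u" using Z spP spC by auto
    note f = cs_facts[OF Zc Z(2)]
    show "?thesis Z" using f Z(2) by (auto simp: anchor_def spread_def)
  qed
  define E1 where "E1 = {Z \<in> space P. Z \<inter> {0..u1} \<noteq> {} \<and> Z \<inter> {u1<..u} = {}}"
  define F1 where "F1 = {Z \<in> space P. Z \<inter> {0..u1} \<noteq> {}}"
  have F1s: "F1 \<in> sets P" unfolding F1_def spP sP using hit_sets[of "{0..u1}" u] by simp
  have E1s: "E1 \<in> sets P"
  proof -
    have "{u1..u} \<inter> {u1<..<u+1} = {u1<..u}" by auto
    then have "E1 = F1 \<inter> {Z \<in> space (Cmeas u). Z \<inter> ({u1..u} \<inter> {u1<..<u+1}) = {}}"
      unfolding E1_def F1_def spP by auto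
    then show ?thesis using F1s missS_sets[of u u1 u u1 "u+1"] sP by auto
  qed
  have EF1: "E1 \<subseteq> F1" unfolding E1_def F1_def by auto
  have FE1: "F1 - E1 \<subseteq> N \<inter> ({Z. anchor Z \<in> {u1 - u\<^sup>2<..u1}} \<union> D)"
  proof
    fix Z assume Z: "Z \<in> F1 - E1"
    then obtain z1 z2 where z: "Z \<in> space P" "z1 \<in> Z" "z1 \<le> u1" "z2 \<in> Z" "u1 < z2"
      unfolding E1_def F1_def by auto
    then have ne: "Z \<noteq> {}" by auto
    note k = key[OF z(1) ne]
    have a1: "anchor Z \<le> u1" using k z by auto
    show "Z \<in> N \<inter> ({Z. anchor Z \<in> {u1 - u\<^sup>2<..u1}} \<union> D)"
    proof (cases "u\<^sup>2 \<le> spread Z")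
      case True
      then show ?thesis using z ne unfolding N_def D_def by auto
    next
      case False
      have "Sup Z \<ge> z2" using k z by auto
      then have "anchor Z > u1 - u\<^sup>2" using False k z by auto
      then show ?thesis using a1 z ne unfolding N_def by auto
    qed
  qed
  have NB1: "N \<inter> {Z. anchor Z \<in> {..u1}} \<subseteq> F1"
  proof
    fix Z assume Z: "Z \<in> N \<inter> {Z. anchor Z \<in> {..u1}}"
    then have z: "Z \<in> space P" "Z \<noteq> {}" "anchor Z \<le> u1" unfolding N_def by auto
    note k = key[OF z(1,2)]
    have "Inf Z \<in> Z \<inter> {0..u1}" using k z by auto
    then show "Z \<in> F1" using z unfolding F1_def by auto
  qed
  have cB1: "measure lborel ({0<..<u} \<inter> {..u1}) = u1"
  proof -
    have "{0<..<u} \<inter> {..u1} = {0<..u1}" using u1 by auto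
    then show ?thesis using u1 by (simp add: measure_Ioc)
  qed
  have g1: "(\<lambda>Z. Z \<inter> {0..u1}) \<in> measurable P (Cmeas u1)"
    by (subst measurable_cong_sets[OF sP refl]) (rule R1_meas)
  have "tv_dist (distr (uniform_measure P E1) (Cmeas u1) (\<lambda>Z. Z \<inter> {0..u1}))
                 (distr (uniform_measure P F1) (Cmeas u1) (\<lambda>Z. Z \<inter> {0..u1})) \<le> measure P (F1 - E1) / measure P F1"
    by (rule tv_bound[OF P E1s F1s EF1 g1])
  also have "\<dots> \<le> 2 * u * u / u1"
    by (rule main_bound[OF P sP u(1) u1(1) N_def D_def eqA' Dq' E1s F1s EF1 FE1 _ NB1 cB1]) simp
  finally show "tv_dist (distr (cond P {Z \<in> space P. Z \<inter> {0..u1} \<noteq> {} \<and> Z \<inter> {u1<..u} = {}}) (Cmeas u1) (\<lambda>Z. Z \<inter> {0..u1}))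
                 (distr (cond P {Z \<in> space P. Z \<inter> {0..u1} \<noteq> {}}) (Cmeas u1) (\<lambda>Z. Z \<inter> {0..u1})) \<le> 2 * u * u / u1"
    unfolding cond_def E1_def F1_def .
next
  have u: "0 < u" "0 < u2" using u1 u12 by auto
  have spP: "space P = space (Cmeas u)" using sP by (rule sets_eq_imp_space_eq)
  have spC: "space (Cmeas u) = closed_subsets u" by (rule space_Cmeas)
  define N where "N = {Z \<in> space P. Z \<noteq> {}}"
  define D where "D = {Z \<in> space P. u\<^sup>2 \<le> spread Z}"
  have eqA': "distr (uniform_measure P N) lborel anchor = uniform_measure lborel {0<..<u}"
    using eqA unfolding N_def cond_def .
  have Dq': "measure (uniform_measure P N) D \<le> u"
    using Dq unfolding N_def D_def cond_def .
  have key: "\<And>Z. Z \<in> space P \<Longrightarrow> Z \<noteq> {} \<Longrightarrow> Inf Z \<in> Z \<and> Sup Z \<in> Z \<and> (\<forall>z\<in>Z. Inf Z \<le> z \<and> z \<le> Sup Z) \<and> Z \<subseteq> {0..u}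
     \<and> anchor Z = Inf Z \<and> spread Z = Sup Z - Inf Z"
  proof -
    fix Z assume Z: "Z \<in> space P" "Z \<noteq> {}"
    have Zc: "Z \<in> closed_subsets u" using Z spP spC by auto
    note f = cs_facts[OF Zc Z(2)]
    show "?thesis Z" using f Z(2) by (auto simp: anchor_def spread_def)
  qed
  define E2 where "E2 = {Z \<in> space P. Z \<inter> {0..u1} = {} \<and> Z \<inter> {u1..u} \<noteq> {}}"
  define F2 where "F2 = {Z \<in> space P. Z \<inter> {u1..u} \<noteq> {}}"
  have F2': "{Z \<in> space P. (\<lambda>r. r - u1) ` (Z \<inter> {u1..u}) \<noteq> {}} = F2" unfolding F2_def by simp
  have F2s: "F2 \<in> sets P" unfolding F2_def spP sP using hit_sets[of "{u1..u}" u] by simp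
  have E2s: "E2 \<in> sets P"
  proof -
    have "E2 = F2 \<inter> (space (Cmeas u) - {Z \<in> space (Cmeas u). Z \<inter> {0..u1} \<noteq> {}})"
      unfolding E2_def F2_def spP by auto
    then show ?thesis using F2s hit_sets[of "{0..u1}" u] sP by auto
  qed
  have EF2: "E2 \<subseteq> F2" unfolding E2_def F2_def by auto
  have FE2: "F2 - E2 \<subseteq> N \<inter> ({Z. anchor Z \<in> {u1 - u\<^sup>2<..u1}} \<union> D)"
  proof
    fix Z assume Z: "Z \<in> F2 - E2"
    then obtain z1 z2 where z: "Z \<in> space P" "z1 \<in> Z" "z1 \<le> u1" "z2 \<in> Z" "u1 \<le> z2"
      unfolding E2_def F2_def by auto
    then have ne: "Z \<noteq> {}" by auto
    note k = key[OF z(1) ne]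
    have a1: "anchor Z \<le> u1" using k z by auto
    show "Z \<in> N \<inter> ({Z. anchor Z \<in> {u1 - u\<^sup>2<..u1}} \<union> D)"
    proof (cases "u\<^sup>2 \<le> spread Z")
      case True
      then show ?thesis using z ne unfolding N_def D_def by auto
    next
      case False
      have "Sup Z \<ge> z2" using k z by auto
      then have "anchor Z > u1 - u\<^sup>2" using False k z by auto
      then show ?thesis using a1 z ne unfolding N_def by auto
    qed
  qed
  have NB2: "N \<inter> {Z. anchor Z \<in> {u1..}} \<subseteq> F2"
  proof
    fix Z assume Z: "Z \<in> N \<inter> {Z. anchor Z \<in> {u1..}}"
    then have z: "Z \<in> space P" "Z \<noteq> {}" "u1 \<le> anchor Z" unfolding N_def by auto
    note k = key[OF z(1,2)]
    have "Inf Z \<in> Z \<inter> {u1..u}" using k z by auto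
    then show "Z \<in> F2" using z unfolding F2_def by auto
  qed
  have cB2: "measure lborel ({0<..<u} \<inter> {u1..}) = u2"
  proof -
    have "{0<..<u} \<inter> {u1..} = {u1..<u}" using u1 by auto
    then show ?thesis using u1 u12 by (simp add: measure_def)
  qed
  have g2: "(\<lambda>Z. (\<lambda>r. r - u1) ` (Z \<inter> {u1..u})) \<in> measurable P (Cmeas u2)"
    by (subst measurable_cong_sets[OF sP refl]) (rule R2_meas[OF u12])
  have "tv_dist (distr (uniform_measure P E2) (Cmeas u2) (\<lambda>Z. (\<lambda>r. r - u1) ` (Z \<inter> {u1..u})))
                 (distr (uniform_measure P F2) (Cmeas u2) (\<lambda>Z. (\<lambda>r. r - u1) ` (Z \<inter> {u1..u}))) \<le> measure P (F2 - E2) / measure P F2"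
    by (rule tv_bound[OF P E2s F2s EF2 g2])
  also have "\<dots> \<le> 2 * u * u / u2"
    by (rule main_bound[OF P sP u(1) u(2) N_def D_def eqA' Dq' E2s F2s EF2 FE2 _ NB2 cB2]) simp
  finally show "tv_dist (distr (cond P {Z \<in> space P. Z \<inter> {0..u1} = {} \<and> Z \<inter> {u1..u} \<noteq> {}}) (Cmeas u2) (\<lambda>Z. (\<lambda>r. r - u1) ` (Z \<inter> {u1..u})))
                 (distr (cond P {Z \<in> space P. (\<lambda>r. r - u1) ` (Z \<inter> {u1..u}) \<noteq> {}}) (Cmeas u2) (\<lambda>Z. (\<lambda>r. r - u1) ` (Z \<inter> {u1..u}))) \<le> 2 * u * u / u2"
    unfolding cond_def E2_def F2' unfolding F2_def .
qed

theorem lemma4p25: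
  fixes \<nu> :: "real \<Rightarrow> real set measure" and s t :: real
  assumes fam: "measurable_factorizing_family \<nu>"
    and s_pos: "s > 0" and t_pos: "t > 0"
    and AD: "\<exists>u0>0. \<forall>u. 0 < u \<and> u < u0 \<longrightarrow>
       distr (cond (\<nu> u) {Z \<in> space (\<nu> u). Z \<noteq> {}}) lborel anchor
          = uniform_measure lborel {0<..<u}
     \<and> measure (cond (\<nu> u) {Z \<in> space (\<nu> u). Z \<noteq> {}})
          {Z \<in> space (\<nu> u). spread Z \<ge> u\<^sup>2} \<le> u"
  shows "\<exists>C::real. \<exists>l0>0. \<forall>l. 0 < l \<and> l < l0 \<longrightarrow>
     (let u = l * (s + t); u1 = l * s; u2 = l * t;
          E10 = {Z \<in> space (\<nu> u). Z \<inter> {0..u1} \<noteq> {} \<and> Z \<inter> {u1<..u} = {}};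
          E01 = {Z \<in> space (\<nu> u). Z \<inter> {0..u1} = {} \<and> Z \<inter> {u1..u} \<noteq> {}};
          R1 = (\<lambda>Z. Z \<inter> {0..u1});
          R2 = (\<lambda>Z. (\<lambda>r. r - u1) ` (Z \<inter> {u1..u}));
          hat10 = distr (cond (\<nu> u) E10) (Cmeas u1) R1;
          hat01 = distr (cond (\<nu> u) E01) (Cmeas u2) R2;
          bar1 = distr (cond (\<nu> u) {Z \<in> space (\<nu> u). R1 Z \<noteq> {}}) (Cmeas u1) R1;
          bar2 = distr (cond (\<nu> u) {Z \<in> space (\<nu> u). R2 Z \<noteq> {}}) (Cmeas u2) R2
      in tv_dist hat10 bar1 \<le> C * u \<and> tv_dist hat01 bar2 \<le> C * u)"
proof -
  obtain u0 where u0: "u0 > 0" and AD': "\<And>u. 0 < u \<Longrightarrow> u < u0 \<Longrightarrow>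
       distr (cond (\<nu> u) {Z \<in> space (\<nu> u). Z \<noteq> {}}) lborel anchor
          = uniform_measure lborel {0<..<u}
     \<and> measure (cond (\<nu> u) {Z \<in> space (\<nu> u). Z \<noteq> {}})
          {Z \<in> space (\<nu> u). spread Z \<ge> u\<^sup>2} \<le> u"
    using AD by blast
  have fam1: "\<And>t. t > 0 \<Longrightarrow> prob_space (\<nu> t) \<and> sets (\<nu> t) = sets (Cmeas t)"
  proof -
    have "\<forall>t>0. prob_space (\<nu> t) \<and> sets (\<nu> t) = sets (Cmeas t)"
      using fam unfolding measurable_factorizing_family_def by (rule conjunct1)
    then show "\<And>t. t > 0 \<Longrightarrow> prob_space (\<nu> t) \<and> sets (\<nu> t) = sets (Cmeas t)" by blast
  qed
  define C where "C = 2 * (s + t) / s + 2 * (s + t) / t"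
  have st: "s + t > 0" using s_pos t_pos by simp
  show ?thesis
  proof (rule exI[of _ C], rule exI[of _ "u0 / (s + t)"], intro conjI allI impI)
    show "u0 / (s + t) > 0" using u0 st by simp
    fix l assume l: "0 < l \<and> l < u0 / (s + t)"
    define u where "u = l * (s + t)"
    define u1 where "u1 = l * s"
    define u2 where "u2 = l * t"
    have uu1: "0 < u" using l st unfolding u_def by simp
    have "l * (s + t) < u0" using l st by (simp add: less_divide_eq)
    then have uu: "0 < u" "u < u0" using uu1 unfolding u_def by auto
    have u1: "0 < u1" "u1 < u" unfolding u1_def u_def using l s_pos t_pos by (auto simp: algebra_simps)
    have u2: "0 < u2" unfolding u2_def using l t_pos by simp
    have u12: "u = u1 + u2" unfolding u_def u1_def u2_def by (simp add: algebra_simps)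
    have P: "prob_space (\<nu> u)" and sP: "sets (\<nu> u) = sets (Cmeas u)" using fam1[OF uu(1)] by auto
    note A = AD'[OF uu]
    note b = per_u[OF P sP u1 u12 conjunct1[OF A] conjunct2[OF A]]
    have c1: "2 * u * u / u1 \<le> C * u"
    proof -
      have "2 * u * u / u1 = (2 * (s + t) / s) * u" unfolding u_def u1_def using l s_pos by (simp add: field_simps)
      also have "\<dots> \<le> C * u" unfolding C_def using uu s_pos t_pos st
        by (intro mult_right_mono) auto
      finally show ?thesis .
    qed
    have c2: "2 * u * u / u2 \<le> C * u"
    proof -
      have "2 * u * u / u2 = (2 * (s + t) / t) * u" unfolding u_def u2_def using l t_pos by (simp add: field_simps)
      also have "\<dots> \<le> C * u" unfolding C_def using uu s_pos t_pos st
        by (intro mult_right_mono) auto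
      finally show ?thesis .
    qed
    show "let u = l * (s + t); u1 = l * s; u2 = l * t;
          E10 = {Z \<in> space (\<nu> u). Z \<inter> {0..u1} \<noteq> {} \<and> Z \<inter> {u1<..u} = {}};
          E01 = {Z \<in> space (\<nu> u). Z \<inter> {0..u1} = {} \<and> Z \<inter> {u1..u} \<noteq> {}};
          R1 = (\<lambda>Z. Z \<inter> {0..u1});
          R2 = (\<lambda>Z. (\<lambda>r. r - u1) ` (Z \<inter> {u1..u}));
          hat10 = distr (cond (\<nu> u) E10) (Cmeas u1) R1;
          hat01 = distr (cond (\<nu> u) E01) (Cmeas u2) R2;
          bar1 = distr (cond (\<nu> u) {Z \<in> space (\<nu> u). R1 Z \<noteq> {}}) (Cmeas u1) R1;
          bar2 = distr (cond (\<nu> u) {Z \<in> space (\<nu> u). R2 Z \<noteq> {}}) (Cmeas u2) R2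
      in tv_dist hat10 bar1 \<le> C * u \<and> tv_dist hat01 bar2 \<le> C * u"
      unfolding Let_def u_def[symmetric] u1_def[symmetric] u2_def[symmetric]
      apply (intro conjI)
       apply (rule order_trans[OF b(1) c1])
      apply (rule order_trans[OF b(2) c2])
      done
  qed
qed

end
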